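(* Let $B=[\alpha_1,\beta_1]\times\dots\times[\alpha_d,\beta_d]$ be an axis-parallel box in $\mathbb{R}^d$ with a diagonally opposite pair of vertices $(\lambda,\lambda')$, and let $B'$ be another axis-parallel box in $\mathbb{R}^d$ with $B'\cap\{\lambda,\lambda'\}=\emptyset$. Then $B'$ is disjoint from at least two faces of $B$.
   Context: For a box $B=[\alpha_1,\beta_1]\times\dots\times[\alpha_d,\beta_d]$: a vertex is a point $(\lambda_1,\dots,\lambda_d)$ with $\lambda_j\in\{\alpha_j,\beta_j\}$ for all $j$; vertices $\lambda=(\lambda_1,\dots,\lambda_d)$ and $\lambda'=(\lambda'_1,\dots,\lambda'_d)$ are diagonally opposite if $\{\lambda_j,\lambda'_j\}=\{\alpha_j,\beta_j\}$ for every $j\in[d]$; a face of $B$ is a set of the form $B\cap\{x: x_j=\alpha_j\}$ or $B\cap\{x:x_j=\beta_j\}$ for some $j\in[d]$. *)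

theory Defs
  imports "HOL-Analysis.Analysis"
begin

text \<open>Axis-parallel boxes in R^d are modelled as cbox a b on real^'n
  (= product of the intervals [a$j, b$j]).\<close>

definition is_vertex :: "real^'n \<Rightarrow> real^'n \<Rightarrow> real^'n \<Rightarrow> bool" where
  "is_vertex \<alpha> \<beta> v \<longleftrightarrow> (\<forall>j. v$j = \<alpha>$j \<or> v$j = \<beta>$j)"

definition diag_opposite :: "real^'n \<Rightarrow> real^'n \<Rightarrow> real^'n \<Rightarrow> real^'n \<Rightarrow> bool" where
  "diag_opposite \<alpha> \<beta> v w \<longleftrightarrow> is_vertex \<alpha> \<beta> v \<and> is_vertex \<alpha> \<beta> w \<and>
     (\<forall>j. {v$j, w$j} = {\<alpha>$j, \<beta>$j})"

definition is_face :: "real^'n \<Rightarrow> real^'n \<Rightarrow> (real^'n) set \<Rightarrow> bool" where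
  "is_face \<alpha> \<beta> F \<longleftrightarrow> (\<exists>j. F = cbox \<alpha> \<beta> \<inter> {x. x$j = \<alpha>$j} \<or> F = cbox \<alpha> \<beta> \<inter> {x. x$j = \<beta>$j})"

end

theory Submission
  imports Defs
begin

lemma face_disj:
  fixes \<gamma> \<delta> l :: "real^'n"
  assumes "l \<notin> cbox \<gamma> \<delta>"
  shows "\<exists>j. \<forall>x\<in>cbox \<gamma> \<delta>. x$j \<noteq> l$j"
proof -
  obtain j where "\<not> (\<gamma>$j \<le> l$j \<and> l$j \<le> \<delta>$j)" using assms by (auto simp: mem_box_cart)
  hence "\<forall>x\<in>cbox \<gamma> \<delta>. x$j \<noteq> l$j" by (auto simp: mem_box_cart) (metis)+
  then show ?thesis by blast
qed

theorem lemma3: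
  fixes \<alpha> \<beta> \<gamma> \<delta> lam lam' :: "real^'n"
  assumes "\<forall>j. \<alpha>$j < \<beta>$j"
    and "diag_opposite \<alpha> \<beta> lam lam'"
    and "cbox \<gamma> \<delta> \<inter> {lam, lam'} = {}"
  shows "\<exists>F1 F2. is_face \<alpha> \<beta> F1 \<and> is_face \<alpha> \<beta> F2 \<and> F1 \<noteq> F2 \<and>
           cbox \<gamma> \<delta> \<inter> F1 = {} \<and> cbox \<gamma> \<delta> \<inter> F2 = {}"
proof -
  have v: "\<And>i. lam$i = \<alpha>$i \<or> lam$i = \<beta>$i" "\<And>i. lam'$i = \<alpha>$i \<or> lam'$i = \<beta>$i"
    and d: "\<And>i. {lam$i, lam'$i} = {\<alpha>$i, \<beta>$i}"
    using assms(2) unfolding diag_opposite_def is_vertex_def by auto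
  have ne: "lam$i \<noteq> lam'$i" for i
    using d[of i] assms(1) by (metis doubleton_eq_iff less_irrefl)
  have inB: "lam \<in> cbox \<alpha> \<beta>"
    unfolding mem_box_cart
  proof
    fix i show "\<alpha>$i \<le> lam$i \<and> lam$i \<le> \<beta>$i" using v(1)[of i] assms(1) less_eq_real_def by auto
  qed
  obtain j where j: "\<forall>x\<in>cbox \<gamma> \<delta>. x$j \<noteq> lam$j"
    using face_disj[of lam \<gamma> \<delta>] assms(3) by auto
  obtain k where k: "\<forall>x\<in>cbox \<gamma> \<delta>. x$k \<noteq> lam'$k"
    using face_disj[of lam' \<gamma> \<delta>] assms(3) by auto
  define F1 where "F1 = cbox \<alpha> \<beta> \<inter> {x. x$j = lam$j}"
  define F2 where "F2 = cbox \<alpha> \<beta> \<inter> {x. x$k = lam'$k}"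
  have f1: "is_face \<alpha> \<beta> F1" unfolding is_face_def F1_def using v(1)[of j] by metis
  have f2: "is_face \<alpha> \<beta> F2" unfolding is_face_def F2_def using v(2)[of k] by metis
  have "lam \<in> F1" "lam \<notin> F2" using inB ne[of k] unfolding F1_def F2_def by auto
  hence "F1 \<noteq> F2" by blast
  moreover have "cbox \<gamma> \<delta> \<inter> F1 = {}" "cbox \<gamma> \<delta> \<inter> F2 = {}"
    using j k unfolding F1_def F2_def by auto
  ultimately show ?thesis using f1 f2 by blast
qed

end
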